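(* Let $(A,\mathfrak m)$ be a Cohen–Macaulay local ring of dimension $d\ge2$ with infinite residue field, let $x_1,\dots,x_d$ be an $A$-superficial sequence, $J=(x_1,\dots,x_d)$, and $(B,\mathfrak n)=(A/(x_1),\mathfrak m/(x_1))$. For an ideal $I$ of $A$ write $\overline I$ for its image in $B$. Since $\overline{\widetilde{\mathfrak m^i}}\subseteq\widetilde{\mathfrak n^i}$, there are natural maps $\eta_i:\widetilde{\mathfrak m^{i+1}}/J\widetilde{\mathfrak m^i}\to\widetilde{\mathfrak n^{i+1}}/\overline J\,\widetilde{\mathfrak n^i}$, $p+J\widetilde{\mathfrak m^i}\mapsto \overline p+\overline J\widetilde{\mathfrak n^i}$, for all $i\ge0$. Then: (1) if $\overline{\widetilde{\mathfrak m^s}}=\widetilde{\mathfrak n^s}$ for some $s$, then $\eta_s$ is injective; (2) if $\overline{\widetilde{\mathfrak m^j}}=\widetilde{\mathfrak n^j}$ for $j=s,s+1$, then $\eta_s$ is bijective.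
   Context: An element $x\in\mathfrak m$ is $A$-superficial if there are $c,n_0$ with $(\mathfrak m^{n+1}:x)\cap\mathfrak m^c=\mathfrak m^n$ for all $n\ge n_0$; a sequence $x_1,\dots,x_r$ is $A$-superficial if $x_1$ is $A$-superficial and $x_i$ is $A/(x_1,\dots,x_{i-1})$-superficial for $i\ge2$. For a local ring $(R,\mathfrak q)$ of positive depth, the Ratliff–Rush closure is $\widetilde{\mathfrak q^i}=\bigcup_{k\ge1}(\mathfrak q^{i+k}:\mathfrak q^k)$ for $i\ge1$, with $\widetilde{\mathfrak q^0}=R$. *)

theory Defs
  imports "HOL-Algebra.Algebra"
begin

primrec ideal_pow :: "('a, 'b) ring_scheme \<Rightarrow> 'a set \<Rightarrow> nat \<Rightarrow> 'a set" where
  "ideal_pow R I 0 = carrier R"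
| "ideal_pow R I (Suc n) = ideal_prod R I (ideal_pow R I n)"

definition colon_ideal :: "('a, 'b) ring_scheme \<Rightarrow> 'a set \<Rightarrow> 'a set \<Rightarrow> 'a set" where
  "colon_ideal R I K = {a \<in> carrier R. \<forall>k\<in>K. a \<otimes>\<^bsub>R\<^esub> k \<in> I}"

definition ratliff_rush :: "('a, 'b) ring_scheme \<Rightarrow> 'a set \<Rightarrow> nat \<Rightarrow> 'a set" where
  "ratliff_rush R q i =
     (if i = 0 then carrier R
      else (\<Union>k\<in>{1..}. colon_ideal R (ideal_pow R q (i + k)) (ideal_pow R q k)))"

definition qimg :: "('a, 'b) ring_scheme \<Rightarrow> 'a set \<Rightarrow> 'a set \<Rightarrow> 'a set set" where
  "qimg R I S = (\<lambda>a. I +>\<^bsub>R\<^esub> a) ` S"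

definition local_ring :: "('a, 'b) ring_scheme \<Rightarrow> 'a set \<Rightarrow> bool" where
  "local_ring R m \<longleftrightarrow> cring R \<and> noetherian_ring R \<and> maximalideal m R \<and>
     (\<forall>M. maximalideal M R \<longrightarrow> M = m)"

definition prime_chain :: "('a, 'b) ring_scheme \<Rightarrow> nat \<Rightarrow> bool" where
  "prime_chain R n \<longleftrightarrow> (\<exists>P :: nat \<Rightarrow> 'a set.
      (\<forall>i\<le>n. primeideal (P i) R) \<and> (\<forall>i<n. P i \<subset> P (Suc i)))"

definition krull_dim :: "('a, 'b) ring_scheme \<Rightarrow> nat \<Rightarrow> bool" where
  "krull_dim R d \<longleftrightarrow> prime_chain R d \<and> \<not> prime_chain R (Suc d)"

definition regular_seq :: "('a, 'b) ring_scheme \<Rightarrow> 'a set \<Rightarrow> (nat \<Rightarrow> 'a) \<Rightarrow> nat \<Rightarrow> bool" where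
  "regular_seq R m y n \<longleftrightarrow>
     (\<forall>i\<in>{1..n}. y i \<in> m \<and>
        (\<forall>a\<in>carrier R. y i \<otimes>\<^bsub>R\<^esub> a \<in> genideal R (y ` {1..i-1}) \<longrightarrow>
                        a \<in> genideal R (y ` {1..i-1}))) \<and>
     genideal R (y ` {1..n}) \<noteq> carrier R"

definition depth :: "('a, 'b) ring_scheme \<Rightarrow> 'a set \<Rightarrow> nat \<Rightarrow> bool" where
  "depth R m n \<longleftrightarrow> (\<exists>y. regular_seq R m y n) \<and> \<not> (\<exists>y. regular_seq R m y (Suc n))"

definition cohen_macaulay :: "('a, 'b) ring_scheme \<Rightarrow> 'a set \<Rightarrow> bool" where
  "cohen_macaulay R m \<longleftrightarrow> local_ring R m \<and> (\<exists>d. krull_dim R d \<and> depth R m d)"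

definition superficial :: "('a, 'b) ring_scheme \<Rightarrow> 'a set \<Rightarrow> 'a \<Rightarrow> bool" where
  "superficial R m x \<longleftrightarrow> x \<in> m \<and>
     (\<exists>c n0. \<forall>n\<ge>n0. colon_ideal R (ideal_pow R m (Suc n)) {x} \<inter> ideal_pow R m c
                       = ideal_pow R m n)"

definition superficial_seq :: "('a, 'b) ring_scheme \<Rightarrow> 'a set \<Rightarrow> (nat \<Rightarrow> 'a) \<Rightarrow> nat \<Rightarrow> bool" where
  "superficial_seq A m x r \<longleftrightarrow> superficial A m (x 1) \<and>
     (\<forall>i\<in>{2..r}. superficial (A Quot (genideal A (x ` {1..i-1})))
                      (qimg A (genideal A (x ` {1..i-1})) m)
                      (genideal A (x ` {1..i-1}) +>\<^bsub>A\<^esub> x i))"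

definition eta_dom :: "('a, 'b) ring_scheme \<Rightarrow> 'a set \<Rightarrow> 'a set \<Rightarrow> nat \<Rightarrow> 'a set set" where
  "eta_dom A m J i =
     {(ideal_prod A J (ratliff_rush A m i)) +>\<^bsub>A\<^esub> p | p. p \<in> ratliff_rush A m (Suc i)}"

definition eta_cod :: "('a, 'b) ring_scheme \<Rightarrow> 'a set \<Rightarrow> 'a set \<Rightarrow> 'a set \<Rightarrow> nat \<Rightarrow> 'a set set set" where
  "eta_cod A m J X1 i =
     (let B = A Quot X1; n = qimg A X1 m; Jb = qimg A X1 J in
      {(ideal_prod B Jb (ratliff_rush B n i)) +>\<^bsub>B\<^esub> q | q. q \<in> ratliff_rush B n (Suc i)})"

definition eta :: "('a, 'b) ring_scheme \<Rightarrow> 'a set \<Rightarrow> 'a set \<Rightarrow> 'a set \<Rightarrow> nat \<Rightarrow> 'a set \<Rightarrow> 'a set set" where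
  "eta A m J X1 i C =
     (let B = A Quot X1; n = qimg A X1 m; Jb = qimg A X1 J;
          p = (SOME p. p \<in> ratliff_rush A m (Suc i) \<and>
                        C = (ideal_prod A J (ratliff_rush A m i)) +>\<^bsub>A\<^esub> p) in
      (ideal_prod B Jb (ratliff_rush B n i)) +>\<^bsub>B\<^esub> (X1 +>\<^bsub>A\<^esub> p))"

end

theory Submission
  imports Defs
begin

lemma coset_eq_iff:
  assumes "ideal I R" "a \<in> carrier R" "b \<in> carrier R"
  shows "(I +>\<^bsub>R\<^esub> a = I +>\<^bsub>R\<^esub> b) = (a \<ominus>\<^bsub>R\<^esub> b \<in> I)"
proof -
  interpret ideal I R by fact
  show ?thesis
  proof
    assume "I +>\<^bsub>R\<^esub> a = I +>\<^bsub>R\<^esub> b"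
    then have "a \<in> I +>\<^bsub>R\<^esub> b" using a_rcos_self assms by metis
    then show "a \<ominus>\<^bsub>R\<^esub> b \<in> I" using a_rcos_module_minus[OF ring_axioms assms(3,2)] by simp
  next
    assume "a \<ominus>\<^bsub>R\<^esub> b \<in> I"
    then have "a \<in> I +>\<^bsub>R\<^esub> b" using a_rcos_module_minus[OF ring_axioms assms(3,2)] by simp
    then show "I +>\<^bsub>R\<^esub> a = I +>\<^bsub>R\<^esub> b" using a_repr_independence' assms by metis
  qed
qed

lemma (in ring) ideal_pow_ideal: "ideal I R \<Longrightarrow> ideal (ideal_pow R I k) R"
  by (induction k) (auto simp: oneideal ideal_prod_is_ideal)

lemma (in ring) ideal_pow_mono: "ideal I R \<Longrightarrow> ideal_pow R I (k+l) \<subseteq> ideal_pow R I k"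
proof (induction l)
  case 0 then show ?case by simp
next
  case (Suc l)
  have "ideal_pow R I (k + Suc l) = I \<cdot> ideal_pow R I (k+l)" by simp
  also have "\<dots> \<subseteq> ideal_pow R I (k+l)" using ideal_prod_inter[OF Suc.prems ideal_pow_ideal[OF Suc.prems]] by blast
  finally show ?case using Suc by blast
qed

lemma (in cring) col_lift:
  assumes I: "ideal I R" and c: "c \<in> carrier R"
    and h: "\<forall>w\<in>ideal_pow R I k. c \<otimes> w \<in> ideal_pow R I (t+k)"
  shows "\<forall>u\<in>ideal_pow R I (k+l). c \<otimes> u \<in> ideal_pow R I (t+(k+l))"
proof (induction l)
  case 0 then show ?case using h by simp
next
  case (Suc l)
  show ?case
  proof
    fix u assume "u \<in> ideal_pow R I (k + Suc l)"
    then have "u \<in> I \<cdot> ideal_pow R I (k+l)" by simp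
    then have "c \<otimes> u \<in> I \<cdot> ideal_pow R I (t+(k+l))"
    proof (induct u rule: ideal_prod.induct)
      case (prod y v)
      have yc: "y \<in> carrier R" by (rule ideal.Icarr[OF I prod(1)])
      have vc: "v \<in> carrier R" by (rule ideal.Icarr[OF ideal_pow_ideal[OF I] prod(2)])
      have eq: "c \<otimes> (y \<otimes> v) = y \<otimes> (c \<otimes> v)" by (rule m_lcomm[OF c yc vc])
      have "c \<otimes> v \<in> ideal_pow R I (t+(k+l))" using Suc.IH prod(2) by (rule bspec)
      then have "y \<otimes> (c \<otimes> v) \<in> I \<cdot> ideal_pow R I (t+(k+l))" by (rule ideal_prod.prod[OF prod(1)])
      then show ?case using eq by simp
    next
      case (sum s1 s2)
      have "s1 \<in> carrier R" "s2 \<in> carrier R"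
        using sum(1,3) ideal_prod_in_carrier[OF I ideal_pow_ideal[OF I]] by auto
      then have "c \<otimes> (s1 \<oplus> s2) = c \<otimes> s1 \<oplus> c \<otimes> s2" using c r_distr by simp
      then show ?case using ideal_prod.sum[OF sum(2,4)] by simp
    qed
    then show "c \<otimes> u \<in> ideal_pow R I (t + (k + Suc l))" by simp
  qed
qed


lemma (in cring) idealI_simple:
  assumes S: "S \<subseteq> carrier R" and z: "\<zero> \<in> S"
    and ad: "\<And>a b. a \<in> S \<Longrightarrow> b \<in> S \<Longrightarrow> a \<oplus> b \<in> S"
    and ml: "\<And>a r. a \<in> S \<Longrightarrow> r \<in> carrier R \<Longrightarrow> r \<otimes> a \<in> S"
  shows "ideal S R"
proof (rule idealI)
  show "ring R" by (rule ring_axioms)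
  show "subgroup S (add_monoid R)"
  proof (rule add.subgroupI, goal_cases)
    case 1 show ?case using S by simp
  next
    case 2 show ?case using z by blast
  next
    case (3 a)
    then have a: "a \<in> S" .
    then have ac: "a \<in> carrier R" using S by blast
    have "(\<ominus> \<one>) \<otimes> a = \<ominus> (\<one> \<otimes> a)" by (rule l_minus) (simp_all add: ac)
    then have "\<ominus> a = (\<ominus> \<one>) \<otimes> a" using ac by simp
    moreover have "(\<ominus> \<one>) \<otimes> a \<in> S" by (rule ml[OF a]) simp
    ultimately show ?case by simp
  next
    case (4 a b)
    then show ?case using ad by simp
  qed
next
  fix a x assume a: "a \<in> S" and x: "x \<in> carrier R"
  show "x \<otimes> a \<in> S" by (rule ml[OF a x])
  have "a \<otimes> x = x \<otimes> a" using a S x m_comm by blast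
  then show "a \<otimes> x \<in> S" using ml[OF a x] by simp
qed

lemma (in cring) rr_char:
  assumes I: "ideal I R"
  shows "ratliff_rush R I s = {a \<in> carrier R. \<exists>k. \<forall>w\<in>ideal_pow R I k. a \<otimes> w \<in> ideal_pow R I (s+k)}"
proof (cases "s = 0")
  case True
  have "a \<otimes> w \<in> carrier R" if "a \<in> carrier R" "w \<in> carrier R" for a w using that by simp
  then show ?thesis using True unfolding ratliff_rush_def
    by auto (rule exI[of _ 0], simp)
next
  case False
  show ?thesis
  proof
    show "ratliff_rush R I s \<subseteq> {a \<in> carrier R. \<exists>k. \<forall>w\<in>ideal_pow R I k. a \<otimes> w \<in> ideal_pow R I (s+k)}"
      using False unfolding ratliff_rush_def colon_ideal_def by auto
  next
    show "{a \<in> carrier R. \<exists>k. \<forall>w\<in>ideal_pow R I k. a \<otimes> w \<in> ideal_pow R I (s+k)} \<subseteq> ratliff_rush R I s"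
    proof
      fix a assume "a \<in> {a \<in> carrier R. \<exists>k. \<forall>w\<in>ideal_pow R I k. a \<otimes> w \<in> ideal_pow R I (s+k)}"
      then obtain k where a: "a \<in> carrier R" and k: "\<forall>w\<in>ideal_pow R I k. a \<otimes> w \<in> ideal_pow R I (s+k)" by blast
      have "\<forall>u\<in>ideal_pow R I (k+1). a \<otimes> u \<in> ideal_pow R I (s+(k+1))"
        by (rule col_lift[OF I a k])
      then have "a \<in> colon_ideal R (ideal_pow R I (s + (k+1))) (ideal_pow R I (k+1))"
        unfolding colon_ideal_def using a by blast
      moreover have "k+1 \<in> {1..}" by simp
      ultimately have "\<exists>j\<in>{1..}. a \<in> colon_ideal R (ideal_pow R I (s + j)) (ideal_pow R I j)" by blast
      then show "a \<in> ratliff_rush R I s" using False unfolding ratliff_rush_def by (simp only: if_False UN_iff)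
    qed
  qed
qed

lemma (in cring) rr_ideal:
  assumes I: "ideal I R"
  shows "ideal (ratliff_rush R I s) R"
  unfolding rr_char[OF I]
proof (rule idealI_simple)
  show "{a \<in> carrier R. \<exists>k. \<forall>w\<in>ideal_pow R I k. a \<otimes> w \<in> ideal_pow R I (s + k)} \<subseteq> carrier R" by blast
  have "\<forall>w\<in>ideal_pow R I 0. \<zero> \<otimes> w \<in> ideal_pow R I (s + 0)"
    using additive_subgroup.zero_closed[OF ideal.axioms(1)[OF ideal_pow_ideal[OF I]]] by simp
  then show "\<zero> \<in> {a \<in> carrier R. \<exists>k. \<forall>w\<in>ideal_pow R I k. a \<otimes> w \<in> ideal_pow R I (s + k)}" by blast
next
  fix a b assume "a \<in> {a \<in> carrier R. \<exists>k. \<forall>w\<in>ideal_pow R I k. a \<otimes> w \<in> ideal_pow R I (s + k)}"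
    "b \<in> {a \<in> carrier R. \<exists>k. \<forall>w\<in>ideal_pow R I k. a \<otimes> w \<in> ideal_pow R I (s + k)}"
  then obtain k1 k2 where a: "a \<in> carrier R" and k1: "\<forall>w\<in>ideal_pow R I k1. a \<otimes> w \<in> ideal_pow R I (s+k1)"
    and b: "b \<in> carrier R" and k2: "\<forall>w\<in>ideal_pow R I k2. b \<otimes> w \<in> ideal_pow R I (s+k2)" by blast
  have A: "\<forall>u\<in>ideal_pow R I (k1+k2). a \<otimes> u \<in> ideal_pow R I (s+(k1+k2))" by (rule col_lift[OF I a k1])
  have B0: "\<forall>u\<in>ideal_pow R I (k2+k1). b \<otimes> u \<in> ideal_pow R I (s+(k2+k1))" by (rule col_lift[OF I b k2])
  then have B: "\<forall>u\<in>ideal_pow R I (k1+k2). b \<otimes> u \<in> ideal_pow R I (s+(k1+k2))" by (simp add: add.commute)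
  have "\<forall>w\<in>ideal_pow R I (k1+k2). (a \<oplus> b) \<otimes> w \<in> ideal_pow R I (s+(k1+k2))"
  proof
    fix w assume w: "w \<in> ideal_pow R I (k1+k2)"
    then have wc: "w \<in> carrier R" by (rule ideal.Icarr[OF ideal_pow_ideal[OF I]])
    have "(a \<oplus> b) \<otimes> w = a \<otimes> w \<oplus> b \<otimes> w" using a b wc l_distr by simp
    then show "(a \<oplus> b) \<otimes> w \<in> ideal_pow R I (s+(k1+k2))"
      using additive_subgroup.a_closed[OF ideal.axioms(1)[OF ideal_pow_ideal[OF I]]] A B w by simp
  qed
  then show "a \<oplus> b \<in> {a \<in> carrier R. \<exists>k. \<forall>w\<in>ideal_pow R I k. a \<otimes> w \<in> ideal_pow R I (s + k)}"
    using a b by blast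
next
  fix a r assume "a \<in> {a \<in> carrier R. \<exists>k. \<forall>w\<in>ideal_pow R I k. a \<otimes> w \<in> ideal_pow R I (s + k)}"
    and r: "r \<in> carrier R"
  then obtain k where a: "a \<in> carrier R" and k: "\<forall>w\<in>ideal_pow R I k. a \<otimes> w \<in> ideal_pow R I (s+k)" by blast
  have "\<forall>w\<in>ideal_pow R I k. (r \<otimes> a) \<otimes> w \<in> ideal_pow R I (s+k)"
  proof
    fix w assume w: "w \<in> ideal_pow R I k"
    then have wc: "w \<in> carrier R" by (rule ideal.Icarr[OF ideal_pow_ideal[OF I]])
    have "(r \<otimes> a) \<otimes> w = r \<otimes> (a \<otimes> w)" using a r wc m_assoc by simp
    then show "(r \<otimes> a) \<otimes> w \<in> ideal_pow R I (s+k)"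
      using ideal.I_l_closed[OF ideal_pow_ideal[OF I]] k w r by simp
  qed
  then show "r \<otimes> a \<in> {a \<in> carrier R. \<exists>k. \<forall>w\<in>ideal_pow R I k. a \<otimes> w \<in> ideal_pow R I (s + k)}"
    using a r by blast
qed

lemma (in cring) rr_mult:
  assumes I: "ideal I R" and y: "y \<in> I" and a: "a \<in> ratliff_rush R I s"
  shows "y \<otimes> a \<in> ratliff_rush R I (Suc s)"
proof -
  from a obtain k where ac: "a \<in> carrier R" and k: "\<forall>w\<in>ideal_pow R I k. a \<otimes> w \<in> ideal_pow R I (s+k)"
    unfolding rr_char[OF I] by blast
  have yc: "y \<in> carrier R" by (rule ideal.Icarr[OF I y])
  have "\<forall>w\<in>ideal_pow R I k. (y \<otimes> a) \<otimes> w \<in> ideal_pow R I (Suc s+k)"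
  proof
    fix w assume w: "w \<in> ideal_pow R I k"
    then have wc: "w \<in> carrier R" by (rule ideal.Icarr[OF ideal_pow_ideal[OF I]])
    have "(y \<otimes> a) \<otimes> w = y \<otimes> (a \<otimes> w)" using ac yc wc m_assoc by simp
    moreover have "y \<otimes> (a \<otimes> w) \<in> I \<cdot> ideal_pow R I (s+k)"
      by (rule ideal_prod.prod[OF y]) (rule bspec[OF k w])
    ultimately show "(y \<otimes> a) \<otimes> w \<in> ideal_pow R I (Suc s+k)" by simp
  qed
  then show ?thesis unfolding rr_char[OF I] using ac yc by blast
qed

lemma (in cring) rr_prod_sub:
  assumes I: "ideal I R" and J: "ideal J R" and JI: "J \<subseteq> I"
  shows "J \<cdot> ratliff_rush R I s \<subseteq> ratliff_rush R I (Suc s)"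
proof
  fix z assume "z \<in> J \<cdot> ratliff_rush R I s"
  then show "z \<in> ratliff_rush R I (Suc s)"
  proof (induct z rule: ideal_prod.induct)
    case (prod i j)
    have "i \<in> I" using prod(1) JI by blast
    then show ?case by (rule rr_mult[OF I _ prod(2)])
  next
    case (sum s1 s2)
    then show ?case using additive_subgroup.a_closed[OF ideal.axioms(1)[OF rr_ideal[OF I]]] by blast
  qed
qed

lemma (in cring) rr_key:
  assumes I: "ideal I R" and sup: "superficial R I x" and a: "a \<in> carrier R"
    and ax: "a \<otimes> x \<in> ratliff_rush R I (Suc s)"
  shows "a \<in> ratliff_rush R I s"
proof -
  from sup obtain c n0 where xI: "x \<in> I" and
    cn: "\<forall>n\<ge>n0. colon_ideal R (ideal_pow R I (Suc n)) {x} \<inter> ideal_pow R I c = ideal_pow R I n"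
    unfolding superficial_def by blast
  have xc: "x \<in> carrier R" by (rule ideal.Icarr[OF I xI])
  have axc: "a \<otimes> x \<in> carrier R" using a xc by simp
  from ax obtain k where k: "\<forall>w\<in>ideal_pow R I k. (a \<otimes> x) \<otimes> w \<in> ideal_pow R I (Suc s+k)"
    unfolding rr_char[OF I] by blast
  define K where "K = k + (c + n0)"
  have L: "\<forall>u\<in>ideal_pow R I K. (a \<otimes> x) \<otimes> u \<in> ideal_pow R I (Suc s+K)"
    unfolding K_def by (rule col_lift[OF I axc k])
  have "\<forall>u\<in>ideal_pow R I K. a \<otimes> u \<in> ideal_pow R I (s+K)"
  proof
    fix u assume u: "u \<in> ideal_pow R I K"
    have uc: "u \<in> carrier R" by (rule ideal.Icarr[OF ideal_pow_ideal[OF I] u])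
    have "ideal_pow R I (c + (k+n0)) \<subseteq> ideal_pow R I c" by (rule ideal_pow_mono[OF I])
    moreover have "c + (k+n0) = K" unfolding K_def by simp
    ultimately have "u \<in> ideal_pow R I c" using u by blast
    then have auc: "a \<otimes> u \<in> ideal_pow R I c" using ideal.I_l_closed[OF ideal_pow_ideal[OF I]] a by blast
    have "(a \<otimes> u) \<otimes> x = (a \<otimes> x) \<otimes> u" using a uc xc m_assoc m_comm by (metis)
    then have "(a \<otimes> u) \<otimes> x \<in> ideal_pow R I (Suc (s+K))" using bspec[OF L u] by simp
    then have "a \<otimes> u \<in> colon_ideal R (ideal_pow R I (Suc (s+K))) {x}"
      unfolding colon_ideal_def using a uc by simp
    moreover have "s + K \<ge> n0" unfolding K_def by simp
    ultimately show "a \<otimes> u \<in> ideal_pow R I (s+K)" using cn auc by blast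
  qed
  then show ?thesis unfolding rr_char[OF I] using a by blast
qed


lemma (in ring) mem_from_diff:
  assumes "ideal I R" "a \<in> carrier R" "b \<in> carrier R" "a \<ominus> b \<in> I" "b \<in> I"
  shows "a \<in> I"
proof -
  have "(a \<ominus> b) \<oplus> b \<in> I"
    using additive_subgroup.a_closed[OF ideal.axioms(1)[OF assms(1)]] assms(4,5) by blast
  moreover have "(a \<ominus> b) \<oplus> b = a" using assms(2,3) by (simp add: a_minus_def a_assoc l_neg)
  ultimately show ?thesis by simp
qed

lemma (in cring) qimg_prod:
  assumes Ix: "ideal Ix R" and I: "ideal I R" and K: "ideal K R"
  shows "qimg R Ix (I \<cdot> K) = ideal_prod (R Quot Ix) (qimg R Ix I) (qimg R Ix K)"
proof -
  have hom: "((+>) Ix) \<in> ring_hom R (R Quot Ix)" by (rule ideal.rcos_ring_hom[OF Ix])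
  have Ic: "\<And>i. i \<in> I \<Longrightarrow> i \<in> carrier R" by (rule ideal.Icarr[OF I])
  have Kc: "\<And>i. i \<in> K \<Longrightarrow> i \<in> carrier R" by (rule ideal.Icarr[OF K])
  have IKc: "\<And>i. i \<in> I \<cdot> K \<Longrightarrow> i \<in> carrier R" using ideal_prod_in_carrier[OF I K] by blast
  show ?thesis
  proof
    show "qimg R Ix (I \<cdot> K) \<subseteq> ideal_prod (R Quot Ix) (qimg R Ix I) (qimg R Ix K)"
    proof
      fix z assume "z \<in> qimg R Ix (I \<cdot> K)"
      then obtain w where w: "w \<in> I \<cdot> K" and z: "z = Ix +> w" unfolding qimg_def by blast
      have "Ix +> w \<in> ideal_prod (R Quot Ix) (qimg R Ix I) (qimg R Ix K)" using w
      proof (induct w rule: ideal_prod.induct)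
        case (prod i k)
        have "Ix +> (i \<otimes> k) = (Ix +> i) \<otimes>\<^bsub>R Quot Ix\<^esub> (Ix +> k)"
          by (rule ring_hom_mult[OF hom Ic[OF prod(1)] Kc[OF prod(2)]])
        moreover have "Ix +> i \<in> qimg R Ix I" "Ix +> k \<in> qimg R Ix K" unfolding qimg_def using prod by auto
        ultimately show ?case using ideal_prod.prod by metis
      next
        case (sum s1 s2)
        have "Ix +> (s1 \<oplus> s2) = (Ix +> s1) \<oplus>\<^bsub>R Quot Ix\<^esub> (Ix +> s2)"
          by (rule ring_hom_add[OF hom IKc[OF sum(1)] IKc[OF sum(3)]])
        then show ?case using ideal_prod.sum[OF sum(2,4)] by simp
      qed
      then show "z \<in> ideal_prod (R Quot Ix) (qimg R Ix I) (qimg R Ix K)" using z by simp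
    qed
  next
    show "ideal_prod (R Quot Ix) (qimg R Ix I) (qimg R Ix K) \<subseteq> qimg R Ix (I \<cdot> K)"
    proof
      fix z assume "z \<in> ideal_prod (R Quot Ix) (qimg R Ix I) (qimg R Ix K)"
      then show "z \<in> qimg R Ix (I \<cdot> K)"
      proof (induct z rule: ideal_prod.induct)
        case (prod i' k')
        then obtain i k where i: "i \<in> I" "i' = Ix +> i" and k: "k \<in> K" "k' = Ix +> k"
          unfolding qimg_def by blast
        have "Ix +> (i \<otimes> k) = (Ix +> i) \<otimes>\<^bsub>R Quot Ix\<^esub> (Ix +> k)"
          by (rule ring_hom_mult[OF hom Ic[OF i(1)] Kc[OF k(1)]])
        moreover have "i \<otimes> k \<in> I \<cdot> K" using i k ideal_prod.prod by metis
        ultimately show ?case unfolding qimg_def using i k by (metis image_eqI)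
      next
        case (sum s1 s2)
        have "ideal ((+>) Ix ` (I \<cdot> K)) (R Quot Ix)"
          by (rule ring_ideal_imp_quot_ideal[OF Ix ideal_prod_is_ideal[OF I K]])
        then show ?case using sum(2,4) additive_subgroup.a_closed[OF ideal.axioms(1)]
          unfolding qimg_def by (metis (no_types, lifting))
      qed
    qed
  qed
qed

lemma (in cring) xs_in_m:
  assumes mI: "ideal m R" and xcarr: "\<forall>i\<in>{1..d}. x i \<in> carrier R"
    and sup: "superficial_seq R m x d"
  shows "\<forall>i\<in>{1..d}. x i \<in> m"
proof -
  have "1 \<le> i \<longrightarrow> i \<le> d \<longrightarrow> x i \<in> m" for i
  proof (induction i rule: less_induct)
    case (less i)
    show ?case
    proof (intro impI)
      assume i1: "1 \<le> i" and id: "i \<le> d"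
      show "x i \<in> m"
      proof (cases "i = 1")
        case True
        then show ?thesis using sup unfolding superficial_seq_def superficial_def by simp
      next
        case False
        then have i2: "i \<in> {2..d}" using i1 id by simp
        define Ix where "Ix = genideal R (x ` {1..i-1})"
        have gc: "x ` {1..i-1} \<subseteq> carrier R" using xcarr id by auto
        have gm: "x ` {1..i-1} \<subseteq> m" using less.IH id by auto
        have XI: "ideal Ix R" unfolding Ix_def by (rule genideal_ideal[OF gc])
        have Xm: "Ix \<subseteq> m" unfolding Ix_def by (rule genideal_minimal[OF mI gm])
        have "superficial (R Quot Ix) (qimg R Ix m) (Ix +> x i)"
          using sup i2 unfolding superficial_seq_def Ix_def by blast
        then have "Ix +> x i \<in> qimg R Ix m" unfolding superficial_def by blast
        then obtain y where y: "y \<in> m" "Ix +> x i = Ix +> y" unfolding qimg_def by blast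
        have xic: "x i \<in> carrier R" using xcarr i1 id by simp
        have yc: "y \<in> carrier R" by (rule ideal.Icarr[OF mI y(1)])
        have "x i \<ominus> y \<in> Ix" using coset_eq_iff[OF XI xic yc] y(2) by simp
        then show ?thesis using mem_from_diff[OF mI xic yc] Xm y(1) by blast
      qed
    qed
  qed
  then show ?thesis by auto
qed


lemma idl_minus:
  assumes "ideal I R" "a \<in> I" "b \<in> I"
  shows "a \<ominus>\<^bsub>R\<^esub> b \<in> I"
  unfolding a_minus_def
  using additive_subgroup.a_closed[OF ideal.axioms(1)[OF assms(1)]]
        additive_subgroup.a_inv_closed[OF ideal.axioms(1)[OF assms(1)]] assms(2,3) by blast

lemma (in cring) main_aux:
  fixes m :: "'a set" and x :: "nat \<Rightarrow> 'a" and d :: nat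
  assumes mmax: "maximalideal m R"
    and d2: "d \<ge> 2"
    and xcarr: "\<forall>i\<in>{1..d}. x i \<in> carrier R"
    and sup: "superficial_seq R m x d"
  defines "J \<equiv> genideal R (x ` {1..d})"
    and "X1 \<equiv> genideal R {x 1}"
  defines "B \<equiv> R Quot X1"
    and "n \<equiv> qimg R X1 m"
  shows "(\<forall>s. qimg R X1 (ratliff_rush R m s) = ratliff_rush B n s \<longrightarrow>
             inj_on (eta R m J X1 s) (eta_dom R m J s))
       \<and> (\<forall>s. qimg R X1 (ratliff_rush R m s) = ratliff_rush B n s \<and>
              qimg R X1 (ratliff_rush R m (Suc s)) = ratliff_rush B n (Suc s) \<longrightarrow>
             bij_betw (eta R m J X1 s) (eta_dom R m J s) (eta_cod R m J X1 s))"
proof -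
  have crA: "cring R" by (rule is_cring)
  have mI: "ideal m R" using mmax maximalideal.axioms(1) by blast
  have x1sup: "superficial R m (x 1)" using sup unfolding superficial_seq_def by blast
  have xm: "\<forall>i\<in>{1..d}. x i \<in> m" by (rule xs_in_m[OF mI xcarr sup])
  have gc: "x ` {1..d} \<subseteq> carrier R" using xcarr by auto
  have gm: "x ` {1..d} \<subseteq> m" using xm by auto
  have JI: "ideal J R" unfolding J_def by (rule genideal_ideal[OF gc])
  have Jm: "J \<subseteq> m" unfolding J_def by (rule genideal_minimal[OF mI gm])
  have one: "1 \<in> {1..d}" using d2 by simp
  have x1c: "x 1 \<in> carrier R" using xcarr one by blast
  have x1J: "x 1 \<in> J" unfolding J_def using genideal_self[OF gc] one by blast
  have X1eq: "X1 = PIdl (x 1)" unfolding X1_def by (rule cgenideal_eq_genideal[OF x1c, symmetric])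
  have X1I: "ideal X1 R" unfolding X1eq by (rule cgenideal_ideal[OF x1c])
  have Bcr: "cring B" unfolding B_def by (rule ideal.quotient_is_cring[OF X1I crA])
  have hom: "(+>) X1 \<in> ring_hom R B" unfolding B_def by (rule ideal.rcos_ring_hom[OF X1I])
  interpret hq: ring_hom_cring R B "(+>) X1" unfolding B_def by (rule ideal.rcos_ring_hom_cring[OF X1I crA])
  have hc: "\<And>a. a \<in> carrier R \<Longrightarrow> X1 +> a \<in> carrier B" using hom ring_hom_closed by metis
  have hminus: "\<And>a b. a \<in> carrier R \<Longrightarrow> b \<in> carrier R \<Longrightarrow> X1 +> (a \<ominus> b) = (X1 +> a) \<ominus>\<^bsub>B\<^esub> (X1 +> b)"
    unfolding a_minus_def using ring_hom_add[OF hom] hq.hom_a_inv by simp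
  have main: "inj_on (eta R m J X1 s) (eta_dom R m J s) \<and>
      (qimg R X1 (ratliff_rush R m (Suc s)) = ratliff_rush B n (Suc s) \<longrightarrow>
        eta R m J X1 s ` eta_dom R m J s = eta_cod R m J X1 s)"
    if hyp1: "qimg R X1 (ratliff_rush R m s) = ratliff_rush B n s" for s
  proof -
    define Rs where "Rs = ratliff_rush R m s"
    define Rs1 where "Rs1 = ratliff_rush R m (Suc s)"
    define P where "P = ideal_prod R J Rs"
    define Ps where "Ps = ideal_prod B (qimg R X1 J) (ratliff_rush B n s)"
    have RsI: "ideal Rs R" unfolding Rs_def by (rule rr_ideal[OF mI])
    have Rs1I: "ideal Rs1 R" unfolding Rs1_def by (rule rr_ideal[OF mI])
    have PI: "ideal P R" unfolding P_def by (rule ideal_prod_is_ideal[OF JI RsI])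
    have PRs1: "P \<subseteq> Rs1" unfolding P_def Rs_def Rs1_def by (rule rr_prod_sub[OF mI JI Jm])
    have Psq: "Ps = qimg R X1 P"
    proof -
      have "Ps = ideal_prod B (qimg R X1 J) (qimg R X1 Rs)" unfolding Ps_def Rs_def using hyp1 by simp
      then show ?thesis unfolding P_def B_def using qimg_prod[OF X1I JI RsI] by simp
    qed
    have PsI: "ideal Ps B"
      unfolding Psq qimg_def B_def by (rule ring_ideal_imp_quot_ideal[OF X1I PI])
    have etaeq: "\<exists>p. p \<in> Rs1 \<and> C = P +> p \<and> eta R m J X1 s C = Ps +>\<^bsub>B\<^esub> (X1 +> p)"
      if C: "C \<in> eta_dom R m J s" for C
    proof -
      obtain p where "p \<in> Rs1 \<and> C = P +> p" using C unfolding eta_dom_def Rs1_def P_def Rs_def by blast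
      then have "(SOME p. p \<in> Rs1 \<and> C = P +> p) \<in> Rs1 \<and> C = P +> (SOME p. p \<in> Rs1 \<and> C = P +> p)"
        by (rule someI)
      moreover have "eta R m J X1 s C = Ps +>\<^bsub>B\<^esub> (X1 +> (SOME p. p \<in> Rs1 \<and> C = P +> p))"
        unfolding eta_def Let_def Ps_def B_def n_def Rs1_def P_def Rs_def by simp
      ultimately show ?thesis by blast
    qed
    have inj: "inj_on (eta R m J X1 s) (eta_dom R m J s)"
    proof (rule inj_onI)
      fix C C' assume C: "C \<in> eta_dom R m J s" and C': "C' \<in> eta_dom R m J s"
        and eq: "eta R m J X1 s C = eta R m J X1 s C'"
      obtain p where p: "p \<in> Rs1" "C = P +> p" "eta R m J X1 s C = Ps +>\<^bsub>B\<^esub> (X1 +> p)"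
        using etaeq[OF C] by blast
      obtain q where q: "q \<in> Rs1" "C' = P +> q" "eta R m J X1 s C' = Ps +>\<^bsub>B\<^esub> (X1 +> q)"
        using etaeq[OF C'] by blast
      have pc: "p \<in> carrier R" by (rule ideal.Icarr[OF Rs1I p(1)])
      have qc: "q \<in> carrier R" by (rule ideal.Icarr[OF Rs1I q(1)])
      have "Ps +>\<^bsub>B\<^esub> (X1 +> p) = Ps +>\<^bsub>B\<^esub> (X1 +> q)" using eq p q by simp
      then have "(X1 +> p) \<ominus>\<^bsub>B\<^esub> (X1 +> q) \<in> Ps"
        using coset_eq_iff[OF PsI hc[OF pc] hc[OF qc]] by simp
      then have "X1 +> (p \<ominus> q) \<in> qimg R X1 P" using hminus[OF pc qc] Psq by simp
      then obtain w where w: "w \<in> P" "X1 +> (p \<ominus> q) = X1 +> w" unfolding qimg_def by blast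
      have pqc: "p \<ominus> q \<in> carrier R" using pc qc by simp
      have wc: "w \<in> carrier R" by (rule ideal.Icarr[OF PI w(1)])
      have "(p \<ominus> q) \<ominus> w \<in> X1" using coset_eq_iff[OF X1I pqc wc] w(2) by simp
      then obtain r where r: "r \<in> carrier R" "(p \<ominus> q) \<ominus> w = r \<otimes> x 1"
        unfolding X1eq cgenideal_def by blast
      have "p \<ominus> q \<in> Rs1" by (rule idl_minus[OF Rs1I p(1) q(1)])
      then have "(p \<ominus> q) \<ominus> w \<in> Rs1" using idl_minus[OF Rs1I] w(1) PRs1 by blast
      then have "r \<otimes> x 1 \<in> ratliff_rush R m (Suc s)" using r(2) Rs1_def by simp
      then have "r \<in> Rs" using rr_key[OF mI x1sup r(1)] unfolding Rs_def by blast
      then have "x 1 \<otimes> r \<in> P" unfolding P_def by (rule ideal_prod.prod[OF x1J])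
      then have "(p \<ominus> q) \<ominus> w \<in> P" using r m_comm x1c by simp
      then have "p \<ominus> q \<in> P" using mem_from_diff[OF PI pqc wc _ w(1)] by blast
      then have "P +> p = P +> q" using coset_eq_iff[OF PI pc qc] by simp
      then show "C = C'" using p q by simp
    qed
    have img: "eta R m J X1 s ` eta_dom R m J s = eta_cod R m J X1 s"
      if hyp2: "qimg R X1 (ratliff_rush R m (Suc s)) = ratliff_rush B n (Suc s)"
    proof -
      have codeq: "eta_cod R m J X1 s = {Ps +>\<^bsub>B\<^esub> q | q. q \<in> ratliff_rush B n (Suc s)}"
        unfolding eta_cod_def Let_def Ps_def B_def n_def by simp
      show ?thesis
      proof
        show "eta R m J X1 s ` eta_dom R m J s \<subseteq> eta_cod R m J X1 s"
        proof
          fix E assume "E \<in> eta R m J X1 s ` eta_dom R m J s"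
          then obtain C where C: "C \<in> eta_dom R m J s" "E = eta R m J X1 s C" by blast
          obtain p where p: "p \<in> Rs1" "C = P +> p" "eta R m J X1 s C = Ps +>\<^bsub>B\<^esub> (X1 +> p)"
            using etaeq[OF C(1)] by blast
          have "X1 +> p \<in> ratliff_rush B n (Suc s)"
            using hyp2 p(1) unfolding Rs1_def qimg_def by blast
          then show "E \<in> eta_cod R m J X1 s" unfolding codeq using C(2) p(3) by blast
        qed
      next
        show "eta_cod R m J X1 s \<subseteq> eta R m J X1 s ` eta_dom R m J s"
        proof
          fix E assume "E \<in> eta_cod R m J X1 s"
          then obtain q where q: "q \<in> ratliff_rush B n (Suc s)" "E = Ps +>\<^bsub>B\<^esub> q" unfolding codeq by blast
          then obtain p where p: "p \<in> Rs1" "q = X1 +> p" using hyp2 unfolding Rs1_def qimg_def by blast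
          define C where "C = P +> p"
          have C: "C \<in> eta_dom R m J s" unfolding C_def eta_dom_def P_def Rs_def using p(1) Rs1_def by blast
          obtain p' where p': "p' \<in> Rs1" "C = P +> p'" "eta R m J X1 s C = Ps +>\<^bsub>B\<^esub> (X1 +> p')"
            using etaeq[OF C] by blast
          have pc: "p \<in> carrier R" by (rule ideal.Icarr[OF Rs1I p(1)])
          have p'c: "p' \<in> carrier R" by (rule ideal.Icarr[OF Rs1I p'(1)])
          have "p' \<ominus> p \<in> P" using coset_eq_iff[OF PI p'c pc] p'(2) C_def by simp
          then have "X1 +> (p' \<ominus> p) \<in> Ps" unfolding Psq qimg_def by blast
          then have "(X1 +> p') \<ominus>\<^bsub>B\<^esub> (X1 +> p) \<in> Ps" using hminus[OF p'c pc] by simp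
          then have "Ps +>\<^bsub>B\<^esub> (X1 +> p') = Ps +>\<^bsub>B\<^esub> (X1 +> p)"
            using coset_eq_iff[OF PsI hc[OF p'c] hc[OF pc]] by simp
          then have "E = eta R m J X1 s C" using p'(3) q(2) p(2) by simp
          then show "E \<in> eta R m J X1 s ` eta_dom R m J s" using C by blast
        qed
      qed
    qed
    show ?thesis using inj img by blast
  qed
  show ?thesis using main unfolding bij_betw_def by blast
qed


theorem mainTheorem7:
  fixes A :: "('a, 'b) ring_scheme" and m :: "'a set" and x :: "nat \<Rightarrow> 'a" and d :: nat
  assumes CM: "cohen_macaulay A m"
    and dim: "krull_dim A d"
    and d2: "d \<ge> 2"
    and inf_res: "infinite (carrier (A Quot m))"
    and xcarr: "\<forall>i\<in>{1..d}. x i \<in> carrier A"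
    and sup: "superficial_seq A m x d"
  defines "J \<equiv> genideal A (x ` {1..d})"
    and "X1 \<equiv> genideal A {x 1}"
  defines "B \<equiv> A Quot X1"
    and "n \<equiv> qimg A X1 m"
  shows "(\<forall>s. qimg A X1 (ratliff_rush A m s) = ratliff_rush B n s \<longrightarrow>
             inj_on (eta A m J X1 s) (eta_dom A m J s))
       \<and> (\<forall>s. qimg A X1 (ratliff_rush A m s) = ratliff_rush B n s \<and>
              qimg A X1 (ratliff_rush A m (Suc s)) = ratliff_rush B n (Suc s) \<longrightarrow>
             bij_betw (eta A m J X1 s) (eta_dom A m J s) (eta_cod A m J X1 s))"
proof -
  have crA: "cring A" and mmax: "maximalideal m A"
    using CM unfolding cohen_macaulay_def local_ring_def by auto
  show ?thesis unfolding J_def X1_def B_def n_def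
    by (rule cring.main_aux[OF crA mmax d2 xcarr sup])
qed

end
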